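(* Let $n\ge3$ and $k$ an odd integer with $3\le k\le n$. Then $\chi(\mathfrak{g}_{n,k})=n-k+1$.
   Context: $\mathfrak{g}_{n,k}$ is the Lie algebra over a field $K$ of characteristic zero with basis $e_1,\dots,e_n$ whose only nonzero brackets between basis vectors (up to antisymmetry) are $[e_1,e_i]=e_{i+1}$ for $2\le i\le n-1$ and $[e_i,e_{k-i}]=(-1)^ie_n$ for $2\le i\le k-2$. For a Lie algebra $\mathfrak{h}$ and $\ell\in\mathfrak{h}^*$, $\mathfrak{h}(\ell)=\{y\in\mathfrak{h}\mid\ell([x,y])=0\ \forall x\in\mathfrak{h}\}$ and the index is $\chi(\mathfrak{h})=\min_{\ell\in\mathfrak{h}^*}\dim\mathfrak{h}(\ell)$. *)

theory Defs
  imports Complex_Main "HOL-Library.Function_Algebras"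
begin

text \<open>Vectors of K^n are represented as functions nat => K supported on {1..n};
  the basis vector e_i corresponds to the indicator of i.\<close>

definition fscale :: "'a::field \<Rightarrow> (nat \<Rightarrow> 'a) \<Rightarrow> (nat \<Rightarrow> 'a)" where
  "fscale c f = (\<lambda>i. c * f i)"

lemma vector_space_fscale: "vector_space (fscale :: 'a::field \<Rightarrow> _)"
  by unfold_locales (auto simp: fscale_def algebra_simps fun_eq_iff)

definition carrier_n :: "nat \<Rightarrow> (nat \<Rightarrow> 'a::field) set" where
  "carrier_n n = {v. \<forall>i. i \<notin> {1..n} \<longrightarrow> v i = 0}"

text \<open>Coefficient of e_m in [e_i, e_j] for the Lie algebra g_{n,k}:
  [e_1,e_i] = e_{i+1} (2 <= i <= n-1), [e_i,e_{k-i}] = (-1)^i e_n (2 <= i <= k-2),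
  extended by antisymmetry ([e_i,e_1] = - e_{i+1}); all other brackets vanish.\<close>

definition gcoef :: "nat \<Rightarrow> nat \<Rightarrow> nat \<Rightarrow> nat \<Rightarrow> nat \<Rightarrow> 'a::field" where
  "gcoef n k i j m =
     (if i = 1 \<and> 2 \<le> j \<and> j \<le> n - 1 \<and> m = j + 1 then 1 else 0)
   - (if j = 1 \<and> 2 \<le> i \<and> i \<le> n - 1 \<and> m = i + 1 then 1 else 0)
   + (if 2 \<le> i \<and> i \<le> k - 2 \<and> j = k - i \<and> m = n then (-1) ^ i else 0)"

definition gbracket :: "nat \<Rightarrow> nat \<Rightarrow> (nat \<Rightarrow> 'a::field) \<Rightarrow> (nat \<Rightarrow> 'a) \<Rightarrow> (nat \<Rightarrow> 'a)" where
  "gbracket n k x y =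
     (\<lambda>m. if m \<in> {1..n} then (\<Sum>i\<in>{1..n}. \<Sum>j\<in>{1..n}. x i * y j * gcoef n k i j m) else 0)"

definition functionals :: "nat \<Rightarrow> ((nat \<Rightarrow> 'a::field) \<Rightarrow> 'a) set" where
  "functionals n = {l. (\<forall>x\<in>carrier_n n. \<forall>y\<in>carrier_n n. l (x + y) = l x + l y)
                     \<and> (\<forall>c. \<forall>x\<in>carrier_n n. l (fscale c x) = c * l x)}"

definition stab :: "nat \<Rightarrow> nat \<Rightarrow> ((nat \<Rightarrow> 'a::field) \<Rightarrow> 'a) \<Rightarrow> (nat \<Rightarrow> 'a) set" where
  "stab n k l = {y \<in> carrier_n n. \<forall>x\<in>carrier_n n. l (gbracket n k x y) = 0}"

definition gdim :: "(nat \<Rightarrow> 'a::field) set \<Rightarrow> nat" where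
  "gdim S = Vector_Spaces.vector_space.dim fscale S"

definition lie_index :: "nat \<Rightarrow> nat \<Rightarrow> 'a::field itself \<Rightarrow> nat" where
  "lie_index n k (_ :: 'a itself) =
     Min ((\<lambda>l. gdim (stab n k l)) ` (functionals n :: ((nat \<Rightarrow> 'a) \<Rightarrow> 'a) set))"

end

theory Submission
  imports Defs
begin

interpretation fs: vector_space "fscale :: 'a::field \<Rightarrow> (nat \<Rightarrow> 'a) \<Rightarrow> _"
  by (rule vector_space_fscale)

definition ev :: "nat \<Rightarrow> nat \<Rightarrow> 'a::field" where
  "ev i = (\<lambda>m. if m = i then 1 else 0)"

lemma sum_fun_apply: "(sum f A) m = (\<Sum>i\<in>A. f i m)"
  by (induction A rule: infinite_finite_induct) (auto simp: plus_fun_def zero_fun_def)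

lemma carrier_eq_sum:
  assumes "v \<in> carrier_n n"
  shows "v = (\<Sum>i\<in>{1..n}. fscale (v i) (ev i))"
proof
  fix m
  show "v m = (\<Sum>i\<in>{1..n}. fscale (v i) (ev i)) m"
  proof -
    have "(\<Sum>i\<in>{1..n}. fscale (v i) (ev i)) m = (\<Sum>i\<in>{1..n}. if m = i then v i else 0)"
      unfolding sum_fun_apply by (rule sum.cong) (auto simp: fscale_def ev_def)
    also have "\<dots> = (if m \<in> {1..n} then v m else 0)" by (simp add: sum.delta)
    also have "\<dots> = v m" using assms by (auto simp: carrier_n_def)
    finally show ?thesis by simp
  qed
qed

lemma carrier_span: "carrier_n n \<subseteq> fs.span ((ev :: nat \<Rightarrow> nat \<Rightarrow> 'a::field) ` {1..n})"
proof
  fix v :: "nat \<Rightarrow> 'a" assume "v \<in> carrier_n n"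
  then have "v = (\<Sum>i\<in>{1..n}. fscale (v i) (ev i))" by (rule carrier_eq_sum)
  also have "\<dots> \<in> fs.span (ev ` {1..n})"
    by (intro fs.span_sum fs.span_scale fs.span_base) auto
  finally show "v \<in> fs.span (ev ` {1..n})" .
qed

lemma dim_le_n:
  assumes "S \<subseteq> carrier_n n"
  shows "fs.dim (S :: (nat \<Rightarrow> 'a::field) set) \<le> n"
proof -
  have "fs.dim S \<le> card ((ev :: nat \<Rightarrow> nat \<Rightarrow> 'a) ` {1..n})"
    using assms carrier_span by (intro fs.dim_le_card) auto
  also have "\<dots> \<le> n" using card_image_le[of "{1..n}" ev] by simp
  finally show ?thesis .
qed

lemma dim_ge:
  assumes "S \<subseteq> carrier_n n" "V \<subseteq> S" "fs.independent V"
  shows "card V \<le> fs.dim (S :: (nat \<Rightarrow> 'a::field) set)"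
proof -
  obtain B where B: "B \<subseteq> S" "fs.independent B" "S \<subseteq> fs.span B" "card B = fs.dim S"
    using fs.basis_exists by blast
  have "B \<subseteq> fs.span ((ev :: nat \<Rightarrow> nat \<Rightarrow> 'a) ` {1..n})" using B(1) assms(1) carrier_span by blast
  then have "finite B" using fs.independent_span_bound[of "(ev :: nat \<Rightarrow> nat \<Rightarrow> 'a) ` {1..n}" B] B(2) by auto
  then have "card V \<le> card B" using fs.independent_span_bound[of B V] assms B by auto
  then show ?thesis using B by simp
qed

lemma functional_sum:
  assumes l: "l \<in> functionals n" and v: "v \<in> carrier_n n"
  shows "l v = (\<Sum>i\<in>{1..n}. v i * l (ev i))"
proof -
  have ev_c: "ev i \<in> carrier_n n" if "i \<in> {1..n}" for i
    using that by (auto simp: ev_def carrier_n_def)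
  have sc: "fscale c w \<in> carrier_n n" if "w \<in> carrier_n n" for c w
    using that by (auto simp: fscale_def carrier_n_def)
  have l0: "l 0 = 0"
  proof -
    have "(0::nat\<Rightarrow>'a) \<in> carrier_n n" by (auto simp: carrier_n_def)
    then have "l (fscale 0 0) = 0 * l 0" using l unfolding functionals_def by blast
    moreover have "fscale 0 (0::nat\<Rightarrow>'a) = 0" by (auto simp: fscale_def)
    ultimately show ?thesis by simp
  qed
  have "A \<subseteq> {1..n} \<Longrightarrow> (\<Sum>i\<in>A. fscale (v i) (ev i)) \<in> carrier_n n \<and>
          l (\<Sum>i\<in>A. fscale (v i) (ev i)) = (\<Sum>i\<in>A. v i * l (ev i))" for A
  proof (induction A rule: infinite_finite_induct)
    case (infinite A) then show ?case using finite_subset[of A "{1..n}"] by auto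
  next
    case empty then show ?case using l0 by (simp add: carrier_n_def zero_fun_def)
  next
    case (insert x F)
    then have x: "ev x \<in> carrier_n n" using ev_c by auto
    have c: "fscale (v x) (ev x) \<in> carrier_n n" using sc x by auto
    have "l (fscale (v x) (ev x) + (\<Sum>i\<in>F. fscale (v i) (ev i))) = l (fscale (v x) (ev x)) + l (\<Sum>i\<in>F. fscale (v i) (ev i))"
      using l insert c by (auto simp: functionals_def)
    moreover have "l (fscale (v x) (ev x)) = v x * l (ev x)" using l x by (auto simp: functionals_def)
    moreover have "fscale (v x) (ev x) + (\<Sum>i\<in>F. fscale (v i) (ev i)) \<in> carrier_n n"
      using c insert by (auto simp: carrier_n_def)
    moreover have "l (\<Sum>i\<in>F. fscale (v i) (ev i)) = (\<Sum>i\<in>F. v i * l (ev i))" using insert by auto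
    ultimately show ?case unfolding sum.insert[OF insert(1,2)] by metis
  qed
  from this[of "{1..n}"] show ?thesis using carrier_eq_sum[OF v] by simp
qed


definition Bl :: "nat \<Rightarrow> nat \<Rightarrow> (nat \<Rightarrow> 'a::field) \<Rightarrow> nat \<Rightarrow> nat \<Rightarrow> 'a" where
  "Bl n k L i j = (\<Sum>m\<in>{1..n}. gcoef n k i j m * L m)"

lemma sum_if_eq: "(\<Sum>m\<in>{1..n::nat}. (if P \<and> m = a then c else 0) * (L m :: 'a::field)) =
   (if P \<and> a \<in> {1..n} then c * L a else 0)"
proof -
  have "(\<Sum>m\<in>{1..n}. (if P \<and> m = a then c else 0) * L m) = (\<Sum>m\<in>{1..n}. if m = a then (if P then c * L a else 0) else 0)"
    by (rule sum.cong) auto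
  also have "\<dots> = (if P \<and> a \<in> {1..n} then c * L a else 0)" by (cases P) (simp_all add: sum.delta)
  finally show ?thesis .
qed

lemma Bl_formula:
  assumes "3 \<le> k" "k \<le> n"
  shows "Bl n k L i j =
    (if i = 1 \<and> 2 \<le> j \<and> j \<le> n - 1 then L (j + 1) else 0)
  - (if j = 1 \<and> 2 \<le> i \<and> i \<le> n - 1 then L (i + 1) else 0)
  + (if 2 \<le> i \<and> i \<le> k - 2 \<and> j = k - i then (-1) ^ i * L n else 0)"
proof -
  have "Bl n k L i j =
     (\<Sum>m\<in>{1..n}. (if i = 1 \<and> 2 \<le> j \<and> j \<le> n - 1 \<and> m = j + 1 then 1 else 0) * L m)
   - (\<Sum>m\<in>{1..n}. (if j = 1 \<and> 2 \<le> i \<and> i \<le> n - 1 \<and> m = i + 1 then 1 else 0) * L m)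
   + (\<Sum>m\<in>{1..n}. (if (2 \<le> i \<and> i \<le> k - 2 \<and> j = k - i) \<and> m = n then (-1) ^ i else 0) * L m)"
    unfolding Bl_def gcoef_def by (simp add: algebra_simps sum.distrib sum_subtractf conj_assoc)
  also have "\<dots> = (if i = 1 \<and> 2 \<le> j \<and> j \<le> n - 1 then L (j + 1) else 0)
  - (if j = 1 \<and> 2 \<le> i \<and> i \<le> n - 1 then L (i + 1) else 0)
  + (if 2 \<le> i \<and> i \<le> k - 2 \<and> j = k - i then (-1) ^ i * L n else 0)"
    using assms
    apply (subst sum_if_eq[where P="i = 1 \<and> 2 \<le> j \<and> j \<le> n - 1", unfolded conj_assoc])
    apply (subst sum_if_eq[where P="j = 1 \<and> 2 \<le> i \<and> i \<le> n - 1", unfolded conj_assoc])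
    apply (subst sum_if_eq)
    by auto
  finally show ?thesis .
qed

lemma sum_if_eq1: "(\<Sum>m\<in>{1..n::nat}. (if m = a then c else 0) * (L m :: 'a::field)) =
   (if a \<in> {1..n} then c * L a else 0)"
  using sum_if_eq[of True a c L n] by simp

definition row :: "nat \<Rightarrow> nat \<Rightarrow> (nat \<Rightarrow> 'a::field) \<Rightarrow> nat \<Rightarrow> (nat \<Rightarrow> 'a) \<Rightarrow> 'a" where
  "row n k L i y = (\<Sum>j\<in>{1..n}. Bl n k L i j * y j)"

lemma gbracket_carrier: "gbracket n k x y \<in> carrier_n n"
  by (auto simp: gbracket_def carrier_n_def)

lemma l_bracket:
  assumes l: "l \<in> functionals n"
  shows "l (gbracket n k x y) = (\<Sum>i\<in>{1..n}. x i * row n k (\<lambda>m. l (ev m)) i y)"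
proof -
  have "l (gbracket n k x y) = (\<Sum>m\<in>{1..n}. gbracket n k x y m * l (ev m))"
    by (rule functional_sum[OF l gbracket_carrier])
  also have "\<dots> = (\<Sum>m\<in>{1..n}. (\<Sum>i\<in>{1..n}. \<Sum>j\<in>{1..n}. x i * y j * gcoef n k i j m) * l (ev m))"
    by (rule sum.cong) (auto simp: gbracket_def)
  also have "\<dots> = (\<Sum>m\<in>{1..n}. \<Sum>i\<in>{1..n}. \<Sum>j\<in>{1..n}. x i * (gcoef n k i j m * l (ev m) * y j))"
    by (simp add: sum_distrib_right sum_distrib_left algebra_simps)
  also have "\<dots> = (\<Sum>i\<in>{1..n}. \<Sum>m\<in>{1..n}. \<Sum>j\<in>{1..n}. x i * (gcoef n k i j m * l (ev m) * y j))"
    by (rule sum.swap)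
  also have "\<dots> = (\<Sum>i\<in>{1..n}. \<Sum>j\<in>{1..n}. \<Sum>m\<in>{1..n}. x i * (gcoef n k i j m * l (ev m) * y j))"
    by (rule sum.cong[OF refl], rule sum.swap)
  also have "\<dots> = (\<Sum>i\<in>{1..n}. x i * row n k (\<lambda>m. l (ev m)) i y)"
    by (simp add: row_def Bl_def sum_distrib_left sum_distrib_right)
  finally show ?thesis .
qed


lemma stabI:
  assumes l: "l \<in> functionals n" and y: "y \<in> carrier_n n"
    and r: "\<And>i. i \<in> {1..n} \<Longrightarrow> row n k (\<lambda>m. l (ev m)) i y = 0"
  shows "y \<in> stab n k l"
  using y r l_bracket[OF l] by (auto simp: stab_def)

lemma sum_ev: "j \<in> {1..n} \<Longrightarrow> (\<Sum>j'\<in>{1..n::nat}. B j' * ev j j') = (B j :: 'a::field)"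
proof -
  assume j: "j \<in> {1..n}"
  have "(\<Sum>j'\<in>{1..n::nat}. B j' * ev j j') = (\<Sum>j'\<in>{1..n::nat}. if j' = j then B j else 0)"
    by (rule sum.cong) (auto simp: ev_def)
  then show ?thesis using j by simp
qed

lemma stabD:
  assumes l: "l \<in> functionals n" and y: "y \<in> stab n k l" and i: "i \<in> {1..n}"
  shows "row n k (\<lambda>m. l (ev m)) i y = 0"
proof -
  have "ev i \<in> carrier_n n" using i by (auto simp: ev_def carrier_n_def)
  then have "l (gbracket n k (ev i) y) = 0" using y by (auto simp: stab_def)
  then have "(\<Sum>i'\<in>{1..n}. ev i i' * row n k (\<lambda>m. l (ev m)) i' y) = 0" using l_bracket[OF l] by simp
  then show ?thesis using sum_ev[OF i, of "\<lambda>i'. row n k (\<lambda>m. l (ev m)) i' y"] by (simp add: mult.commute)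
qed

lemma stab_carrier: "stab n k l \<subseteq> carrier_n n"
  by (auto simp: stab_def)

lemma row_comb:
  assumes "j \<in> {1..n}" "j0 \<in> {1..n}"
  shows "row n k L i (ev j - fscale a (ev j0)) = Bl n k L i j - a * Bl n k L i j0"
proof -
  have "row n k L i (ev j - fscale a (ev j0)) =
     (\<Sum>j'\<in>{1..n}. Bl n k L i j' * ev j j') - a * (\<Sum>j'\<in>{1..n}. Bl n k L i j' * ev j0 j')"
    by (simp add: row_def fscale_def algebra_simps sum_subtractf sum_distrib_left)
  then show ?thesis using sum_ev[OF assms(1), of "Bl n k L i"] sum_ev[OF assms(2), of "Bl n k L i"] by simp
qed

lemma lower:
  fixes l :: "(nat \<Rightarrow> 'a::field) \<Rightarrow> 'a"
  assumes "3 \<le> k" "k \<le> n" and l: "l \<in> functionals n"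
  shows "n - k + 1 \<le> fs.dim (stab n k l)"
proof -
  define L where "L = (\<lambda>m. l (ev m))"
  define c where "c = (\<lambda>j. Bl n k L 1 j)"
  have Bcol: "Bl n k L i j = (if i = 1 then c j else 0)" if "j \<in> {k-1..n}" for i j
    using that assms by (auto simp: c_def Bl_formula[OF assms(1,2)])
  obtain j0 where j0: "j0 \<in> {k-1..n}" "c j0 = 0 \<longrightarrow> (\<forall>j\<in>{k-1..n}. c j = 0)"
  proof (cases "\<exists>j\<in>{k-1..n}. c j \<noteq> 0")
    case True then show ?thesis using that by blast
  next
    case False then show ?thesis using that[of n] assms by auto
  qed
  define w where "w = (\<lambda>j. ev j - fscale (c j / c j0) (ev j0) :: nat \<Rightarrow> 'a)"
  define J where "J = {k-1..n} - {j0}"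
  have wc: "w j \<in> carrier_n n" if "j \<in> J" for j
    using that j0 assms by (auto simp: w_def J_def ev_def fscale_def carrier_n_def)
  have ws: "w j \<in> stab n k l" if j: "j \<in> J" for j
  proof (rule stabI[OF l wc[OF j]])
    fix i assume i: "i \<in> {1..n}"
    have "row n k L i (w j) = Bl n k L i j - (c j / c j0) * Bl n k L i j0"
      unfolding w_def using j j0 assms by (intro row_comb) (auto simp: J_def)
    also have "\<dots> = 0" using Bcol j j0 by (auto simp: J_def)
    finally show "row n k (\<lambda>m. l (ev m)) i (w j) = 0" by (simp add: L_def)
  qed
  have wval: "w j j' = (if j' = j then 1 else 0)" if "j \<in> J" "j' \<in> J" for j j'
    using that by (auto simp: w_def J_def ev_def fscale_def)
  have inj: "inj_on w J"
  proof (rule inj_onI)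
    fix a b assume "a \<in> J" "b \<in> J" "w a = w b"
    then have "w a a = w b a" by simp
    then show "a = b" using wval \<open>a \<in> J\<close> \<open>b \<in> J\<close> by (auto split: if_splits)
  qed
  have finJ: "finite J" by (simp add: J_def)
  have ind: "fs.independent (w ` J)"
  proof (rule fs.independent_if_scalars_zero)
    show "finite (w ` J)" using finJ by simp
  next
    fix f x assume s: "(\<Sum>x\<in>w ` J. fscale (f x) x) = 0" and x: "x \<in> w ` J"
    then obtain j1 where j1: "j1 \<in> J" "x = w j1" by auto
    have "0 = (\<Sum>x\<in>w ` J. fscale (f x) x) j1" using s by simp
    also have "\<dots> = (\<Sum>j\<in>J. f (w j) * w j j1)"
      by (simp add: sum_fun_apply sum.reindex[OF inj] fscale_def)
    also have "\<dots> = (\<Sum>j\<in>J. if j = j1 then f (w j1) else 0)"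
      by (rule sum.cong) (auto simp: wval j1)
    also have "\<dots> = f (w j1)" using finJ j1 by simp
    finally show "f x = 0" using j1 by simp
  qed
  have "card (w ` J) = n - k + 1"
    using card_image[OF inj] j0 assms by (simp add: J_def)
  moreover have "card (w ` J) \<le> fs.dim (stab n k l)"
    using dim_ge[OF stab_carrier _ ind] ws by auto
  ultimately show ?thesis by simp
qed


lemma upper:
  assumes "3 \<le> k" "k \<le> n"
  defines "l0 \<equiv> (\<lambda>v::nat \<Rightarrow> 'a::field_char_0. v k + v n)"
  shows "l0 \<in> functionals n" "fs.dim (stab n k l0) \<le> n - k + 1"
proof -
  show l: "l0 \<in> functionals n" by (auto simp: functionals_def l0_def fscale_def algebra_simps)
  define L where "L = (\<lambda>m. l0 (ev m))"
  have Lm: "L m = (if m = k then 1 else 0) + (if m = n then 1 else 0)" for m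
    by (simp add: L_def l0_def ev_def)
  have Ln: "L n \<noteq> 0" using Lm by auto
  have Lk: "L k \<noteq> 0" using Lm by auto
  define c where "c = (\<lambda>j. Bl n k L 1 j)"
  have ck: "c (k-1) = L k"
  proof -
    have "2 \<le> k-1" "k-1 \<le> n-1" "k-1+1 = k" using assms by auto
    then show ?thesis using assms by (simp add: c_def Bl_formula)
  qed
  define w where "w = (\<lambda>j. ev j - fscale (c j / c (k-1)) (ev (k-1)) :: nat \<Rightarrow> 'a)"
  have "stab n k l0 \<subseteq> fs.span (w ` {k..n})"
  proof
    fix y assume y: "y \<in> stab n k l0"
    have yc: "y \<in> carrier_n n" using y stab_carrier by blast
    have r: "row n k L i y = 0" if "i \<in> {1..n}" for i using stabD[OF l y that] by (simp add: L_def)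
    have y0: "y j = 0" if "j \<in> {2..k-2}" for j
    proof -
      have i: "k - j \<in> {1..n}" using that assms by auto
      have "row n k L (k-j) y = (\<Sum>j'\<in>{1..n}. (if j' = j then (-1) ^ (k-j) * L n else 0) * y j')"
        unfolding row_def
      proof (rule sum.cong[OF refl])
        fix j' assume "j' \<in> {1..n}"
        have "k - j \<noteq> 1" "2 \<le> k - j" "k - j \<le> k - 2" "k - (k - j) = j" "L (k - j + 1) = 0"
          using that assms by (auto simp: Lm)
        then show "Bl n k L (k - j) j' * y j' = (if j' = j then (- 1) ^ (k - j) * L n else 0) * y j'"
          using assms by (simp add: Bl_formula)
      qed
      also have "\<dots> = (-1) ^ (k-j) * L n * y j" using that assms by (subst sum_if_eq1) auto
      finally show ?thesis using r[OF i] Ln by simp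
    qed
    have y1: "y 1 = 0"
    proof -
      have i: "k - 1 \<in> {1..n}" using assms by auto
      have "row n k L (k-1) y = (\<Sum>j'\<in>{1..n}. (if j' = 1 then - L k else 0) * y j')"
        unfolding row_def
        by (rule sum.cong[OF refl]) (use assms in \<open>auto simp: Bl_formula\<close>)
      also have "\<dots> = - L k * y 1" using assms by (subst sum_if_eq1) auto
      finally show ?thesis using r[OF i] Lk by simp
    qed
    have yz: "y j = 0" if "j \<notin> {k-1..n}" for j
      using that y0[of j] y1 yc assms by (cases "j = 1"; cases "j \<in> {1..n}") (auto simp: carrier_n_def)
    have "0 = row n k L 1 y" using r[of 1] assms by simp
    also have "\<dots> = (\<Sum>j\<in>{1..n}. c j * y j)" by (simp add: row_def c_def)
    also have "\<dots> = (\<Sum>j\<in>{k-1..n}. c j * y j)"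
      using assms yz by (intro sum.mono_neutral_right) auto
    also have "\<dots> = c (k-1) * y (k-1) + (\<Sum>j\<in>{k..n}. c j * y j)"
    proof -
      have "{k-1..n} = insert (k-1) {k..n}" using assms by auto
      moreover have "k - 1 \<notin> {k..n}" using assms by auto
      ultimately show ?thesis by simp
    qed
    finally have "c (k-1) * y (k-1) + (\<Sum>j\<in>{k..n}. c j * y j) = 0" by simp
    then have "c (k-1) * y (k-1) = - (\<Sum>j\<in>{k..n}. c j * y j)" by (simp add: eq_neg_iff_add_eq_0)
    then have rel: "y (k-1) = - (\<Sum>j\<in>{k..n}. c j * y j) / c (k-1)"
      using Lk ck by (simp add: field_simps)
    have "y = (\<Sum>j\<in>{k..n}. fscale (y j) (w j))"
    proof
      fix m
      have "(\<Sum>j\<in>{k..n}. fscale (y j) (w j)) m =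
          (\<Sum>j\<in>{k..n}. y j * ev j m) - (\<Sum>j\<in>{k..n}. c j * y j) / c (k-1) * ev (k-1) m"
      proof -
        have "(\<Sum>j\<in>{k..n}. fscale (y j) (w j)) m =
           (\<Sum>j\<in>{k..n}. y j * ev j m - (c j * y j / c (k-1)) * ev (k-1) m)"
          unfolding sum_fun_apply by (rule sum.cong) (auto simp: w_def fscale_def algebra_simps)
        also have "\<dots> = (\<Sum>j\<in>{k..n}. y j * ev j m) - (\<Sum>j\<in>{k..n}. c j * y j) / c (k-1) * ev (k-1) m"
          by (simp add: sum_subtractf sum_distrib_right sum_divide_distrib)
        finally show ?thesis .
      qed
      also have "\<dots> = y m"
      proof (cases "m = k - 1")
        case True
        have "(\<Sum>j\<in>{k..n}. y j * ev j m) = 0" using True assms by (intro sum.neutral) (auto simp: ev_def)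
        then show ?thesis using True rel by (simp add: ev_def)
      next
        case False
        have "(\<Sum>j\<in>{k..n}. y j * ev j m) = (\<Sum>j\<in>{k..n}. if j = m then y m else 0)"
          by (rule sum.cong) (auto simp: ev_def)
        also have "\<dots> = y m" using yz False by auto
        finally show ?thesis using False by (simp add: ev_def)
      qed
      finally show "y m = (\<Sum>j\<in>{k..n}. fscale (y j) (w j)) m" by simp
    qed
    also have "\<dots> \<in> fs.span (w ` {k..n})"
      by (intro fs.span_sum fs.span_scale fs.span_base) auto
    finally show "y \<in> fs.span (w ` {k..n})" .
  qed
  then have "fs.dim (stab n k l0) \<le> card (w ` {k..n})" by (intro fs.dim_le_card) auto
  also have "\<dots> \<le> n - k + 1" using card_image_le[of "{k..n}" w] assms by simp
  finally show "fs.dim (stab n k l0) \<le> n - k + 1" .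
qed


theorem proposition6p7:
  fixes n k :: nat
  assumes "n \<ge> 3" and "odd k" and "3 \<le> k" and "k \<le> n"
  shows "lie_index n k TYPE('a::field_char_0) = n - k + 1"
proof -
  let ?A = "(\<lambda>l. gdim (stab n k l)) ` (functionals n :: ((nat \<Rightarrow> 'a) \<Rightarrow> 'a) set)"
  define l0 where "l0 = (\<lambda>v::nat \<Rightarrow> 'a. v k + v n)"
  have up: "l0 \<in> functionals n" "fs.dim (stab n k l0) \<le> n - k + 1"
    using upper[OF assms(3,4)] unfolding l0_def by auto
  have lo: "n - k + 1 \<le> fs.dim (stab n k l)" if "l \<in> functionals n" for l :: "(nat \<Rightarrow> 'a) \<Rightarrow> 'a"
    using lower[OF assms(3,4) that] .
  have "Min ?A = n - k + 1"
  proof (rule Min_eqI)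
    have "?A \<subseteq> {..n}" using dim_le_n[OF stab_carrier] by (auto simp: gdim_def)
    then show "finite ?A" using finite_subset by blast
  next
    fix y assume "y \<in> ?A" then show "n - k + 1 \<le> y" using lo by (auto simp: gdim_def)
  next
    have "gdim (stab n k l0) = n - k + 1" using up lo[OF up(1)] by (simp add: gdim_def)
    then show "n - k + 1 \<in> ?A" using up(1) by (metis image_eqI)
  qed
  then show ?thesis by (simp add: lie_index_def)
qed

end
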